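(* Let $K$ be a number field of degree $n$ with $r_1$ real embeddings and $2r_2$ non-real complex embeddings, and let $\sigma_1,\dots,\sigma_n$ be its complex embeddings numbered so that $\sigma_i(K)\subset\mathbb{R}$ for $1\leqslant i\leqslant r_1$ and $\sigma_{j+r_2}=\overline{\sigma_j}$ for $r_1+1\leqslant j\leqslant r_1+r_2$. Embed $K$ into $V=\mathbb{R}^{r_1}\times\mathbb{C}^{r_2}$ via $x\mapsto(\sigma_1(x),\dots,\sigma_{r_1+r_2}(x))$, so that every fractional ideal of $O_K$ is a lattice in $V$. Let $\|\ \|$ be a norm on $V$ such that $\|xy\|\leqslant\|x\|\|y\|$ for all $x,y\in V$ (product taken componentwise). Let $k,\ell\in\{1,\dots,n\}$ with $k+\ell\geqslant n+1$, and let $I,J$ be fractional ideals of $O_K$. Then $\lambda_n(IJ)\leqslant\lambda_k(I)\lambda_\ell(J)$.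
   Context: For a lattice $\Gamma$ of the $n$-dimensional real vector space $V$ equipped with the norm $\|\ \|$ and $i\in\{1,\dots,n\}$, the $i$-th Minkowski minimum is $\lambda_i(\Gamma)=\min\{\max(\|e_1\|,\dots,\|e_i\|)\ ;\ (e_1,\dots,e_i)\text{ is a linearly independent family of elements of }\Gamma\}$. *)

theory Defs
  imports "HOL-Analysis.Analysis" "HOL-Computational_Algebra.Polynomial"
begin

(* Number fields are modelled as subfields K of the complex numbers of finite
   dimension n over Q. *)

definition subfield_of_complex :: "complex set \<Rightarrow> bool" where
  "subfield_of_complex K \<longleftrightarrow> 0 \<in> K \<and> 1 \<in> K \<and>
     (\<forall>x\<in>K. \<forall>y\<in>K. x + y \<in> K \<and> x * y \<in> K) \<and>
     (\<forall>x\<in>K. - x \<in> K) \<and> (\<forall>x\<in>K. x \<noteq> 0 \<longrightarrow> inverse x \<in> K)"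

definition rat_degree :: "complex set \<Rightarrow> nat \<Rightarrow> bool" where
  "rat_degree K n \<longleftrightarrow> (\<exists>b :: nat \<Rightarrow> complex. (\<forall>j<n. b j \<in> K) \<and>
     (\<forall>q :: nat \<Rightarrow> rat. (\<Sum>j<n. of_rat (q j) * b j) = 0 \<longrightarrow> (\<forall>j<n. q j = 0)) \<and>
     (\<forall>x\<in>K. \<exists>q :: nat \<Rightarrow> rat. x = (\<Sum>j<n. of_rat (q j) * b j)))"

definition number_field :: "complex set \<Rightarrow> nat \<Rightarrow> bool" where
  "number_field K n \<longleftrightarrow> subfield_of_complex K \<and> rat_degree K n"

definition algebraic_integer :: "complex \<Rightarrow> bool" where
  "algebraic_integer x \<longleftrightarrow> (\<exists>p :: int poly. lead_coeff p = 1 \<and> poly (map_poly of_int p) x = 0)"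

definition ring_of_integers :: "complex set \<Rightarrow> complex set" where
  "ring_of_integers K = {x \<in> K. algebraic_integer x}"

definition fractional_ideal :: "complex set \<Rightarrow> complex set \<Rightarrow> bool" where
  "fractional_ideal K I \<longleftrightarrow> I \<subseteq> K \<and> 0 \<in> I \<and> I \<noteq> {0} \<and>
     (\<forall>x\<in>I. \<forall>y\<in>I. x + y \<in> I) \<and>
     (\<forall>a\<in>ring_of_integers K. \<forall>x\<in>I. a * x \<in> I) \<and>
     (\<exists>d\<in>ring_of_integers K. d \<noteq> 0 \<and> (\<forall>x\<in>I. d * x \<in> ring_of_integers K))"

definition frac_ideal_mult :: "complex set \<Rightarrow> complex set \<Rightarrow> complex set" where
  "frac_ideal_mult I J = {(\<Sum>t<m. a t * b t) | (m::nat) a b. \<forall>t<m. a t \<in> I \<and> b t \<in> J}"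

definition field_embedding :: "complex set \<Rightarrow> (complex \<Rightarrow> complex) \<Rightarrow> bool" where
  "field_embedding K s \<longleftrightarrow> s 1 = 1 \<and>
     (\<forall>x\<in>K. \<forall>y\<in>K. s (x + y) = s x + s y \<and> s (x * y) = s x * s y)"

(* V = R^r1 x C^r2 realised as functions nat \<Rightarrow> complex, coordinates i<r1 real,
   coordinates r1 \<le> i < r1+r2 complex, all others 0 *)
definition Vspace :: "nat \<Rightarrow> nat \<Rightarrow> (nat \<Rightarrow> complex) set" where
  "Vspace r1 r2 = {v. (\<forall>i<r1. v i \<in> \<real>) \<and> (\<forall>i\<ge>r1 + r2. v i = 0)}"

definition is_norm_on :: "(nat \<Rightarrow> complex) set \<Rightarrow> ((nat \<Rightarrow> complex) \<Rightarrow> real) \<Rightarrow> bool" where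
  "is_norm_on V N \<longleftrightarrow>
     (\<forall>v\<in>V. N v \<ge> 0 \<and> (N v = 0 \<longleftrightarrow> v = (\<lambda>_. 0))) \<and>
     (\<forall>v\<in>V. \<forall>c::real. N (\<lambda>t. of_real c * v t) = \<bar>c\<bar> * N v) \<and>
     (\<forall>v\<in>V. \<forall>w\<in>V. N (\<lambda>t. v t + w t) \<le> N v + N w)"

definition canon_embed :: "(nat \<Rightarrow> complex \<Rightarrow> complex) \<Rightarrow> nat \<Rightarrow> nat \<Rightarrow> complex \<Rightarrow> (nat \<Rightarrow> complex)" where
  "canon_embed \<sigma> r1 r2 x = (\<lambda>i. if i < r1 + r2 then \<sigma> i x else 0)"

definition real_lin_indep :: "nat \<Rightarrow> (nat \<Rightarrow> nat \<Rightarrow> complex) \<Rightarrow> bool" where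
  "real_lin_indep i e \<longleftrightarrow> (\<forall>c :: nat \<Rightarrow> real.
     (\<forall>t. (\<Sum>j<i. of_real (c j) * e j t) = 0) \<longrightarrow> (\<forall>j<i. c j = 0))"

(* i-th Minkowski minimum of the lattice \<Gamma> w.r.t. N (the min exists; we write Inf) *)
definition minkowski_min :: "((nat \<Rightarrow> complex) \<Rightarrow> real) \<Rightarrow> (nat \<Rightarrow> complex) set \<Rightarrow> nat \<Rightarrow> real" where
  "minkowski_min N \<Gamma> i = Inf {Max ((\<lambda>j. N (e j)) ` {..<i}) | e.
       (\<forall>j<i. e j \<in> \<Gamma>) \<and> real_lin_indep i e}"

end

theory Submission
  imports Defs "Jordan_Normal_Form.Determinant"
begin

definition qs :: "rat \<Rightarrow> complex \<Rightarrow> complex" where "qs q z = of_rat q * z"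

global_interpretation Q: vector_space qs
  by unfold_locales (auto simp: qs_def algebra_simps of_rat_add of_rat_mult)

lemma sf_basic:
  assumes "subfield_of_complex K"
  shows "0 \<in> K" "1 \<in> K" "x \<in> K \<Longrightarrow> y \<in> K \<Longrightarrow> x + y \<in> K" "x \<in> K \<Longrightarrow> y \<in> K \<Longrightarrow> x * y \<in> K"
    "x \<in> K \<Longrightarrow> - x \<in> K" "x \<in> K \<Longrightarrow> inverse x \<in> K"
  using assms unfolding subfield_of_complex_def by (auto simp: inverse_eq_divide)

lemma sf_diff: "subfield_of_complex K \<Longrightarrow> x \<in> K \<Longrightarrow> y \<in> K \<Longrightarrow> x - y \<in> K"
  using sf_basic[of K] by (metis diff_conv_add_uminus)

lemma sf_divide: "subfield_of_complex K \<Longrightarrow> x \<in> K \<Longrightarrow> y \<in> K \<Longrightarrow> x / y \<in> K"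
  using sf_basic[of K] by (metis divide_inverse)

lemma sf_nat: "subfield_of_complex K \<Longrightarrow> of_nat m \<in> K"
  by (induction m) (auto intro: sf_basic)

lemma sf_int: assumes "subfield_of_complex K" shows "of_int z \<in> K"
proof (cases z rule: int_cases)
  case (nonneg m) then show ?thesis using sf_nat[OF assms] by simp
next
  case (neg m)
  then have "(of_int z :: complex) = - of_nat (Suc m)" by (metis of_int_minus of_int_of_nat_eq)
  then show ?thesis using sf_basic(5)[OF assms sf_nat[OF assms, of "Suc m"]] by metis
qed

lemma sf_rat: assumes "subfield_of_complex K" shows "of_rat q \<in> K"
proof -
  obtain a d where "quotient_of q = (a, d)" by (cases "quotient_of q")
  then have "q = of_int a / of_int d" by (rule quotient_of_div)
  then have "of_rat q = (of_int a / of_int d :: complex)" by (simp add: of_rat_divide)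
  then show ?thesis using sf_divide[OF assms sf_int[OF assms] sf_int[OF assms]] by simp
qed

lemma sf_qs: "subfield_of_complex K \<Longrightarrow> x \<in> K \<Longrightarrow> qs q x \<in> K"
  unfolding qs_def by (intro sf_basic sf_rat) auto

lemma sf_sum: "subfield_of_complex K \<Longrightarrow> (\<And>j. j \<in> A \<Longrightarrow> f j \<in> K) \<Longrightarrow> sum f A \<in> K"
  by (induction A rule: infinite_finite_induct) (auto intro: sf_basic)

lemma sf_subspace: "subfield_of_complex K \<Longrightarrow> Q.subspace K"
  unfolding Q.subspace_def by (auto intro: sf_basic sf_qs)

lemma sf_span: "subfield_of_complex K \<Longrightarrow> S \<subseteq> K \<Longrightarrow> Q.span S \<subseteq> K"
  by (rule Q.span_minimal) (auto intro: sf_subspace)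

section \<open>Embeddings\<close>

lemma fe_add: "field_embedding K s \<Longrightarrow> x \<in> K \<Longrightarrow> y \<in> K \<Longrightarrow> s (x + y) = s x + s y"
  unfolding field_embedding_def by auto
lemma fe_mult: "field_embedding K s \<Longrightarrow> x \<in> K \<Longrightarrow> y \<in> K \<Longrightarrow> s (x * y) = s x * s y"
  unfolding field_embedding_def by auto
lemma fe_one: "field_embedding K s \<Longrightarrow> s 1 = 1"
  unfolding field_embedding_def by auto

lemma fe_zero: assumes "field_embedding K s" "subfield_of_complex K" shows "s 0 = 0"
proof -
  have "s (0 + 0) = s 0 + s 0" using fe_add[OF assms(1)] sf_basic[OF assms(2)] by blast
  then show ?thesis by simp
qed

lemma fe_neg: assumes "field_embedding K s" "subfield_of_complex K" "x \<in> K" shows "s (- x) = - s x"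
proof -
  have nx: "- x \<in> K" by (rule sf_basic(5)[OF assms(2,3)])
  have "s (x + - x) = s x + s (- x)" by (rule fe_add[OF assms(1) assms(3) nx])
  then have "s x + s (- x) = 0" using fe_zero[OF assms(1,2)] by simp
  then show ?thesis by (simp only: add_eq_0_iff)
qed

lemma fe_nat: assumes "field_embedding K s" "subfield_of_complex K" shows "s (of_nat m) = of_nat m"
proof (induction m)
  case 0 then show ?case using fe_zero[OF assms] by simp
next
  case (Suc m)
  have "s (of_nat m + 1) = s (of_nat m) + s 1"
    using fe_add[OF assms(1)] sf_basic(2)[OF assms(2)] sf_nat[OF assms(2)] by blast
  then show ?case using Suc fe_one[OF assms(1)] by (simp add: add.commute)
qed

lemma fe_int: assumes "field_embedding K s" "subfield_of_complex K" shows "s (of_int z) = of_int z"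
proof (cases z rule: int_cases)
  case (nonneg m) then show ?thesis using fe_nat[OF assms] by simp
next
  case (neg m)
  then have e: "(of_int z :: complex) = - of_nat (Suc m)" by (metis of_int_minus of_int_of_nat_eq)
  have "s (- of_nat (Suc m)) = - s (of_nat (Suc m))" using fe_neg[OF assms sf_nat[OF assms(2)]] .
  then show ?thesis unfolding e using fe_nat[OF assms, of "Suc m"] by simp
qed

lemma fe_inverse: assumes "field_embedding K s" "subfield_of_complex K" "x \<in> K" "x \<noteq> 0"
  shows "s (inverse x) = inverse (s x)"
proof -
  have "s (x * inverse x) = s x * s (inverse x)" using fe_mult[OF assms(1) assms(3) sf_basic(6)[OF assms(2,3)]] .
  then have "s x * s (inverse x) = 1" using assms(4) fe_one[OF assms(1)] by simp
  then show ?thesis by (metis inverse_unique)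
qed

lemma fe_rat: assumes "field_embedding K s" "subfield_of_complex K" shows "s (of_rat q) = of_rat q"
proof -
  obtain a d where "quotient_of q = (a, d)" by (cases "quotient_of q")
  then have q: "q = of_int a / of_int d" and d: "d > 0" by (rule quotient_of_div, rule quotient_of_denom_pos)
  have "(of_rat q :: complex) = of_rat (of_int a / of_int d)" using q by (rule arg_cong)
  also have "\<dots> = of_int a * inverse (of_int d)" by (simp add: divide_inverse of_rat_mult of_rat_inverse)
  finally have "(of_rat q :: complex) = of_int a * inverse (of_int d)" .
  moreover have "s (of_int a * inverse (of_int d)) = s (of_int a) * s (inverse (of_int d))"
    by (rule fe_mult[OF assms(1)]) (auto intro: sf_int sf_basic assms(2))
  moreover have "s (inverse (of_int d)) = inverse (of_int d)"
    using fe_inverse[OF assms sf_int[OF assms(2)], of d] d fe_int[OF assms] by simp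
  ultimately show ?thesis using fe_int[OF assms] by simp
qed

lemma fe_qs: assumes "field_embedding K s" "subfield_of_complex K" "x \<in> K" shows "s (qs q x) = qs q (s x)"
  unfolding qs_def using fe_mult[OF assms(1) sf_rat[OF assms(2)] assms(3)] fe_rat[OF assms(1,2)] by simp

lemma fe_sum: assumes "field_embedding K s" "subfield_of_complex K" "\<And>j. j \<in> A \<Longrightarrow> f j \<in> K"
  shows "s (sum f A) = (\<Sum>j\<in>A. s (f j))"
proof (cases "finite A")
  case False then show ?thesis using fe_zero[OF assms(1,2)] by simp
next
  case True
  then show ?thesis using assms(3)
  proof (induction A rule: finite_induct)
    case empty
    have "s (sum f {}) = s 0" by simp
    also have "\<dots> = 0" by (rule fe_zero[OF assms(1,2)])
    finally show ?case by simp
  next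
    case (insert x F)
    have fx: "f x \<in> K" using insert.prems by simp
    have fF: "sum f F \<in> K" using insert.prems by (intro sf_sum[OF assms(2)]) auto
    have "s (f x + sum f F) = s (f x) + s (sum f F)" by (rule fe_add[OF assms(1) fx fF])
    then show ?case using insert by simp
  qed
qed

definition qind :: "nat \<Rightarrow> (nat \<Rightarrow> complex) \<Rightarrow> bool" where
  "qind m x \<longleftrightarrow> (\<forall>q::nat\<Rightarrow>rat. (\<Sum>j<m. of_rat (q j) * x j) = 0 \<longrightarrow> (\<forall>j<m. q j = 0))"

lemma qind_inj: assumes "qind m x" shows "inj_on x {..<m}"
proof (rule inj_onI, rule ccontr)
  fix i j assume ij: "i \<in> {..<m}" "j \<in> {..<m}" "x i = x j" "i \<noteq> j"
  define q where "q = (\<lambda>t. if t = i then (1::rat) else if t = j then -1 else 0)"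
  have "(\<Sum>t<m. of_rat (q t) * x t) = (\<Sum>t\<in>{i,j}. of_rat (q t) * x t)"
    by (rule sum.mono_neutral_right) (use ij in \<open>auto simp: q_def\<close>)
  also have "\<dots> = 0" using ij by (simp add: q_def)
  finally have "q i = 0" using assms ij unfolding qind_def by blast
  then show False by (simp add: q_def)
qed

lemma qind_indep: assumes "qind m x" shows "Q.independent (x ` {..<m})"
proof
  assume "Q.dependent (x ` {..<m})"
  then obtain u where u: "\<exists>v\<in>x ` {..<m}. u v \<noteq> 0" "(\<Sum>v\<in>x ` {..<m}. qs (u v) v) = 0"
    using Q.dependent_finite by auto
  have "(\<Sum>t<m. of_rat (u (x t)) * x t) = (\<Sum>v\<in>x ` {..<m}. qs (u v) v)"
    using sum.reindex[OF qind_inj[OF assms], of "\<lambda>v. qs (u v) v"] by (simp add: qs_def)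
  then have "\<forall>t<m. u (x t) = 0" using u(2) assms unfolding qind_def by metis
  then show False using u(1) by auto
qed

lemma indep_qind: assumes "inj_on x {..<m}" "Q.independent (x ` {..<m})" shows "qind m x"
  unfolding qind_def
proof (rule allI, rule impI)
  fix q :: "nat \<Rightarrow> rat" assume q: "(\<Sum>j<m. of_rat (q j) * x j) = 0"
  define u where "u = (\<lambda>v. q (the_inv_into {..<m} x v))"
  have "(\<Sum>v\<in>x ` {..<m}. qs (u v) v) = (\<Sum>t<m. qs (u (x t)) (x t))"
    by (simp add: sum.reindex[OF assms(1)])
  also have "\<dots> = (\<Sum>j<m. of_rat (q j) * x j)"
    by (rule sum.cong) (auto simp: u_def qs_def the_inv_into_f_f[OF assms(1)])
  finally have "\<forall>v\<in>x ` {..<m}. u v = 0" using q assms(2) Q.dependent_finite by auto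
  then show "\<forall>j<m. q j = 0" by (auto simp: u_def the_inv_into_f_f[OF assms(1)])
qed

lemma qind_card: "qind m x \<Longrightarrow> card (x ` {..<m}) = m"
  using qind_inj card_image by fastforce

section \<open>Basis of K\<close>

lemma nf_sf: "number_field K n \<Longrightarrow> subfield_of_complex K"
  unfolding number_field_def by auto

lemma nf_family:
  assumes "number_field K n"
  obtains b where "\<forall>j<n. b j \<in> K" "qind n b" "\<forall>x\<in>K. \<exists>q. x = (\<Sum>j<n. of_rat (q j) * b j)"
proof -
  have "rat_degree K n" using assms unfolding number_field_def by simp
  then obtain b where H: "(\<forall>j<n. b j \<in> K) \<and>
     (\<forall>q :: nat \<Rightarrow> rat. (\<Sum>j<n. of_rat (q j) * b j) = 0 \<longrightarrow> (\<forall>j<n. q j = 0)) \<and>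
     (\<forall>x\<in>K. \<exists>q :: nat \<Rightarrow> rat. x = (\<Sum>j<n. of_rat (q j) * b j))"
    unfolding rat_degree_def by (elim exE) 
  have "qind n b" unfolding qind_def using conjunct1[OF conjunct2[OF H]] .
  then show ?thesis using that conjunct1[OF H] conjunct2[OF conjunct2[OF H]] by blast
qed

lemma nf_basis:
  assumes "number_field K n"
  obtains B where "B \<subseteq> K" "finite B" "card B = n" "Q.independent B" "K \<subseteq> Q.span B"
proof -
  obtain b where b: "\<forall>j<n. b j \<in> K" "qind n b" "\<forall>x\<in>K. \<exists>q. x = (\<Sum>j<n. of_rat (q j) * b j)"
    using nf_family[OF assms] by blast
  have "K \<subseteq> Q.span (b ` {..<n})"
  proof
    fix x assume "x \<in> K"
    then obtain q where x: "x = (\<Sum>j<n. of_rat (q j) * b j)" using b(3) by blast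
    show "x \<in> Q.span (b ` {..<n})" unfolding x
    proof (rule Q.span_sum)
      fix j assume "j \<in> {..<n}"
      then have "b j \<in> Q.span (b ` {..<n})" by (intro Q.span_base) auto
      then show "of_rat (q j) * b j \<in> Q.span (b ` {..<n})" by (metis Q.span_scale qs_def)
    qed
  qed
  moreover have "b ` {..<n} \<subseteq> K" using b(1) by auto
  moreover have "card (b ` {..<n}) = n" using qind_card[OF b(2)] .
  moreover have "Q.independent (b ` {..<n})" using qind_indep[OF b(2)] .
  ultimately show ?thesis using that[of "b ` {..<n}"] by blast
qed

lemma KB1: assumes "number_field K n" "T \<subseteq> K" "Q.independent T" shows "finite T \<and> card T \<le> n"
proof -
  obtain B where B: "B \<subseteq> K" "finite B" "card B = n" "Q.independent B" "K \<subseteq> Q.span B"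
    using nf_basis[OF assms(1)] by blast
  have "T \<subseteq> Q.span B" using assms(2) B(5) by (rule order_trans)
  then show ?thesis using Q.independent_span_bound[OF B(2) assms(3)] B(3) by simp
qed

lemma KB2: assumes "number_field K n" "finite T" "K \<subseteq> Q.span T" shows "n \<le> card T"
proof -
  obtain B where B: "B \<subseteq> K" "finite B" "card B = n" "Q.independent B" "K \<subseteq> Q.span B"
    using nf_basis[OF assms(1)] by blast
  have "B \<subseteq> Q.span T" using B(1) assms(3) by (rule order_trans)
  then show ?thesis using Q.independent_span_bound[OF assms(2) B(4)] B(3) by simp
qed

lemma KB3: assumes "number_field K n" "T \<subseteq> K" "Q.independent T" "card T = n" shows "K \<subseteq> Q.span T"
proof
  fix z assume z: "z \<in> K"
  show "z \<in> Q.span T"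
  proof (rule ccontr)
    assume nz: "z \<notin> Q.span T"
    then have "z \<notin> T" using Q.span_base by blast
    have "Q.independent (insert z T)" using Q.independent_insertI[OF nz assms(3)] .
    moreover have "insert z T \<subseteq> K" using z assms(2) by simp
    ultimately have "card (insert z T) \<le> n" using KB1[OF assms(1)] by blast
    moreover have "finite T" using KB1[OF assms(1,2,3)] by blast
    ultimately show False using \<open>z \<notin> T\<close> assms(4) by simp
  qed
qed


lemma indep_coeffs_zero:
  assumes "Q.independent G" "finite G" "(\<Sum>w\<in>G. qs (c w) w) = 0" "w \<in> G"
  shows "c w = 0"
proof (rule ccontr)
  assume "c w \<noteq> 0"
  then have "Q.dependent G" unfolding Q.dependent_finite[OF assms(2)]
    using assms(3,4) by (intro exI[of _ c]) auto
  then show False using assms(1) by simp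
qed

lemma lem_dep:
  assumes "finite X" "finite G" "card G < card X" "\<And>x. x \<in> X \<Longrightarrow> g x \<in> Q.span G"
  shows "\<exists>u. (\<exists>x\<in>X. u x \<noteq> 0) \<and> (\<Sum>x\<in>X. qs (u x) (g x)) = 0"
proof (cases "inj_on g X")
  case True
  have "Q.dependent (g ` X)"
  proof (rule ccontr)
    assume ind: "Q.independent (g ` X)"
    have "g ` X \<subseteq> Q.span G" using assms(4) by auto
    then have "card (g ` X) \<le> card G" using Q.independent_span_bound[OF assms(2) ind] by blast
    then show False using card_image[OF True] assms(3) by simp
  qed
  then obtain u' where u': "\<exists>v\<in>g ` X. u' v \<noteq> 0" "(\<Sum>v\<in>g ` X. qs (u' v) v) = 0"
    using Q.dependent_finite[of "g ` X"] assms(1) by auto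
  show ?thesis
  proof (intro exI[of _ "\<lambda>x. u' (g x)"] conjI)
    show "\<exists>x\<in>X. u' (g x) \<noteq> 0" using u'(1) by auto
    show "(\<Sum>x\<in>X. qs (u' (g x)) (g x)) = 0" using u'(2) by (simp add: sum.reindex[OF True])
  qed
next
  case False
  then obtain x1 x2 where x: "x1 \<in> X" "x2 \<in> X" "x1 \<noteq> x2" "g x1 = g x2" unfolding inj_on_def by blast
  define u where "u = (\<lambda>x. if x = x1 then (1::rat) else if x = x2 then -1 else 0)"
  have "(\<Sum>x\<in>X. qs (u x) (g x)) = (\<Sum>x\<in>{x1,x2}. qs (u x) (g x))"
    by (rule sum.mono_neutral_right) (use x assms(1) in \<open>auto simp: u_def qs_def\<close>)
  also have "\<dots> = 0" using x by (simp add: u_def qs_def)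
  finally show ?thesis using x by (intro exI[of _ u]) (auto simp: u_def)
qed

lemma prod_span:
  assumes nf: "number_field K n"
    and X: "X \<subseteq> K" "Q.independent X" and Y: "Y \<subseteq> K" "Q.independent Y"
    and card: "card X + card Y \<ge> n + 1"
  shows "K \<subseteq> Q.span {x * y | x y. x \<in> X \<and> y \<in> Y}"
proof (rule ccontr)
  define P where "P = {x * y | x y. x \<in> X \<and> y \<in> Y}"
  have sf: "subfield_of_complex K" using nf by (rule nf_sf)
  have fX: "finite X" and fY: "finite Y" using KB1[OF nf X] KB1[OF nf Y] by auto
  assume "\<not> K \<subseteq> Q.span {x * y | x y. x \<in> X \<and> y \<in> Y}"
  then obtain z0 where z0: "z0 \<in> K" "z0 \<notin> Q.span P" unfolding P_def by blast
  have PK: "P \<subseteq> K" using X(1) Y(1) sf_basic(4)[OF sf] unfolding P_def by blast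
  obtain C where C: "C \<subseteq> P" "Q.independent C" "P \<subseteq> Q.span C"
    using Q.maximal_independent_subset[of P] by blast
  have z0C: "z0 \<notin> Q.span C" using z0(2) Q.span_mono[OF C(1)] by blast
  have indC': "Q.independent (insert z0 C)" by (rule Q.independent_insertI[OF z0C C(2)])
  have C'K: "insert z0 C \<subseteq> K" using z0(1) C(1) PK by blast
  obtain D where D: "insert z0 C \<subseteq> D" "D \<subseteq> K" "Q.independent D" "K \<subseteq> Q.span D"
    using Q.maximal_independent_subset_extend[OF C'K indC'] by blast
  define \<phi> where "\<phi> v = Q.representation D v z0" for v
  have phi_add: "\<phi> (u + v) = \<phi> u + \<phi> v" if "u \<in> K" "v \<in> K" for u v
  proof -
    have "u \<in> Q.span D" "v \<in> Q.span D" using that D(4) by auto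
    then have "Q.representation D (u + v) = (\<lambda>b. Q.representation D u b + Q.representation D v b)"
      by (intro Q.representation_add[OF D(3)])
    then show ?thesis unfolding \<phi>_def by simp
  qed
  have phi_scale: "\<phi> (qs r v) = r * \<phi> v" if "v \<in> K" for r v
  proof -
    have "v \<in> Q.span D" using that D(4) by auto
    then have "Q.representation D (qs r v) = (\<lambda>b. r * Q.representation D v b)"
      by (intro Q.representation_scale[OF D(3)])
    then show ?thesis unfolding \<phi>_def by simp
  qed
  have phi_zero: "\<phi> 0 = 0" unfolding \<phi>_def by (simp add: Q.representation_zero)
  have phi_z0: "\<phi> z0 = 1" using Q.representation_basis[OF D(3), of z0] D(1) unfolding \<phi>_def by auto
  have phi_sum: "\<phi> (sum f A) = (\<Sum>a\<in>A. \<phi> (f a))" if "\<And>a. a \<in> A \<Longrightarrow> f a \<in> K"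
    for f :: "complex \<Rightarrow> complex" and A
    using that
  proof (induction A rule: infinite_finite_induct)
    case (insert a A)
    then show ?case using phi_add[of "f a" "sum f A"] sf_sum[OF sf, of A f] by simp
  qed (auto simp: phi_zero)
  have phi_C: "\<phi> v = 0" if "v \<in> Q.span C" for v
  proof -
    have sub: "Q.subspace {v. v \<in> K \<and> \<phi> v = 0}"
      unfolding Q.subspace_def using phi_add phi_scale phi_zero sf_basic[OF sf] sf_qs[OF sf] by auto
    have "C \<subseteq> {v. v \<in> K \<and> \<phi> v = 0}"
    proof
      fix c assume c: "c \<in> C"
      then have "c \<noteq> z0" using z0C Q.span_base by blast
      then show "c \<in> {v. v \<in> K \<and> \<phi> v = 0}"
        using c C(1) PK Q.representation_basis[OF D(3), of c] D(1) unfolding \<phi>_def by auto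
    qed
    then show ?thesis using Q.span_minimal[OF _ sub] that by blast
  qed
  have phi_P: "\<phi> (x * y) = 0" if "x \<in> X" "y \<in> Y" for x y
    using phi_C C(3) that unfolding P_def by blast
  obtain F where F: "Y \<subseteq> F" "F \<subseteq> K" "Q.independent F" "K \<subseteq> Q.span F"
    using Q.maximal_independent_subset_extend[OF Y] by blast
  have fF: "finite F" and cF1: "card F \<le> n" using KB1[OF nf F(2,3)] by auto
  have cF: "card F = n" using KB2[OF nf fF F(4)] cF1 by simp
  define G where "G = F - Y"
  have fG: "finite G" using fF unfolding G_def by simp
  have cG: "card G = n - card Y" using card_Diff_subset[OF fY F(1)] cF unfolding G_def by simp
  have "card Y \<le> n" using KB1[OF nf Y] by blast
  then have cXG: "card G < card X" using cG card by linarith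
  define g where "g x = (\<Sum>w\<in>G. qs (\<phi> (x * w)) w)" for x
  have gspan: "g x \<in> Q.span G" for x
    unfolding g_def
  proof (rule Q.span_sum)
    fix w assume "w \<in> G"
    then have "w \<in> Q.span G" by (rule Q.span_base)
    then show "qs (\<phi> (x * w)) w \<in> Q.span G" by (rule Q.span_scale)
  qed
  have "\<exists>u. (\<exists>x\<in>X. u x \<noteq> 0) \<and> (\<Sum>x\<in>X. qs (u x) (g x)) = 0"
    by (rule lem_dep[OF fX fG cXG gspan])
  then obtain u where uu: "(\<exists>x\<in>X. u x \<noteq> 0) \<and> (\<Sum>x\<in>X. qs (u x) (g x)) = 0" ..
  have u: "\<exists>x\<in>X. u x \<noteq> 0" "(\<Sum>x\<in>X. qs (u x) (g x)) = 0"
    using uu by (rule conjunct1, rule conjunct2)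
  define a where "a = (\<Sum>x\<in>X. qs (u x) x)"
  have aK: "a \<in> K" unfolding a_def using X(1) by (intro sf_sum[OF sf] sf_qs[OF sf]) auto
  have a0: "a \<noteq> 0"
  proof
    assume "a = 0"
    then have "\<forall>x\<in>X. u x = 0" using X(2) fX Q.dependent_finite unfolding a_def by blast
    then show False using u(1) by blast
  qed
  have aw: "\<phi> (a * w) = (\<Sum>x\<in>X. u x * \<phi> (x * w))" if wK: "w \<in> K" for w
  proof -
    have mem: "qs (u x) (x * w) \<in> K" if xX: "x \<in> X" for x
      by (intro sf_qs[OF sf] sf_basic(4)[OF sf]) (use X(1) xX wK in auto)
    have "a * w = (\<Sum>x\<in>X. qs (u x) (x * w))" unfolding a_def qs_def
      by (simp add: sum_distrib_right mult.assoc)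
    then have "\<phi> (a * w) = (\<Sum>x\<in>X. \<phi> (qs (u x) (x * w)))"
      using phi_sum[of X "\<lambda>x. qs (u x) (x * w)", OF mem] by simp
    also have "\<dots> = (\<Sum>x\<in>X. u x * \<phi> (x * w))"
      using phi_scale X(1) that sf_basic(4)[OF sf] by (intro sum.cong) auto
    finally show ?thesis .
  qed
  have swap: "(\<Sum>x\<in>X. qs (u x) (g x)) = (\<Sum>w\<in>G. qs (\<Sum>x\<in>X. u x * \<phi> (x * w)) w)"
  proof -
    have "(\<Sum>x\<in>X. qs (u x) (g x)) = (\<Sum>x\<in>X. \<Sum>w\<in>G. of_rat (u x * \<phi> (x * w)) * w)"
      unfolding g_def qs_def by (simp add: sum_distrib_left of_rat_mult mult.assoc)
    also have "\<dots> = (\<Sum>w\<in>G. \<Sum>x\<in>X. of_rat (u x * \<phi> (x * w)) * w)" by (rule sum.swap)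
    also have "\<dots> = (\<Sum>w\<in>G. qs (\<Sum>x\<in>X. u x * \<phi> (x * w)) w)"
      unfolding qs_def by (simp add: sum_distrib_right of_rat_sum)
    finally show ?thesis .
  qed
  have indG: "Q.independent G" using Q.independent_mono[OF F(3)] unfolding G_def by blast
  have aF: "\<phi> (a * w) = 0" if "w \<in> F" for w
  proof (cases "w \<in> Y")
    case True
    have wK: "w \<in> K" using F(2) that by blast
    show ?thesis using aw[OF wK] phi_P True by simp
  next
    case False
    then have wG: "w \<in> G" unfolding G_def using that by simp
    have "(\<Sum>w\<in>G. qs (\<Sum>x\<in>X. u x * \<phi> (x * w)) w) = 0" using u(2) swap by simp
    then have "(\<Sum>x\<in>X. u x * \<phi> (x * w)) = 0"
      by (rule indep_coeffs_zero[OF indG fG _ wG])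
    moreover have wK: "w \<in> K" using F(2) that by blast
    ultimately show ?thesis using aw[OF wK] by simp
  qed
  have sub2: "Q.subspace {v. v \<in> K \<and> \<phi> (a * v) = 0}"
    unfolding Q.subspace_def
  proof (intro conjI ballI allI)
    show "0 \<in> {v. v \<in> K \<and> \<phi> (a * v) = 0}" using sf_basic(1)[OF sf] phi_zero by simp
  next
    fix x y assume x: "x \<in> {v. v \<in> K \<and> \<phi> (a * v) = 0}" and y: "y \<in> {v. v \<in> K \<and> \<phi> (a * v) = 0}"
    have "\<phi> (a * (x + y)) = \<phi> (a * x) + \<phi> (a * y)"
      using phi_add[of "a * x" "a * y"] x y aK sf_basic(4)[OF sf] by (simp add: distrib_left)
    then show "x + y \<in> {v. v \<in> K \<and> \<phi> (a * v) = 0}" using x y sf_basic(3)[OF sf] by simp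
  next
    fix c x assume x: "x \<in> {v. v \<in> K \<and> \<phi> (a * v) = 0}"
    have "a * qs c x = qs c (a * x)" unfolding qs_def by (simp add: ac_simps)
    then have "\<phi> (a * qs c x) = c * \<phi> (a * x)" using phi_scale x aK sf_basic(4)[OF sf] by simp
    then show "qs c x \<in> {v. v \<in> K \<and> \<phi> (a * v) = 0}" using x sf_qs[OF sf] by simp
  qed
  have "F \<subseteq> {v. v \<in> K \<and> \<phi> (a * v) = 0}" using aF F(2) by auto
  then have "Q.span F \<subseteq> {v. v \<in> K \<and> \<phi> (a * v) = 0}" using Q.span_minimal sub2 by blast
  moreover have "inverse a * z0 \<in> K" using sf_basic(4,6)[OF sf] aK z0(1) by blast
  ultimately have "\<phi> (a * (inverse a * z0)) = 0" using F(4) by blast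
  then have "\<phi> z0 = 0" using a0 by (simp add: mult.assoc[symmetric])
  then show False using phi_z0 by simp
qed


lemma of_real_of_rat_c: "(of_real (of_rat q :: real) :: complex) = of_rat q"
proof -
  obtain a d where "quotient_of q = (a, d)" by (cases "quotient_of q")
  then have q: "q = of_int a / of_int d" by (rule quotient_of_div)
  show ?thesis unfolding q by (simp add: of_rat_divide)
qed

lemma dedekind:
  assumes sf: "subfield_of_complex K" and fin: "finite S"
    and emb: "\<forall>i\<in>S. field_embedding K (\<sigma> i)"
    and dist: "\<forall>i\<in>S. \<forall>j\<in>S. i \<noteq> j \<longrightarrow> (\<exists>x\<in>K. \<sigma> i x \<noteq> \<sigma> j x)"
  shows "(\<forall>x\<in>K. (\<Sum>i\<in>S. c i * \<sigma> i x) = 0) \<Longrightarrow> \<forall>i\<in>S. c i = 0"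
  using fin emb dist
proof (induction S arbitrary: c rule: finite_induct)
  case empty then show ?case by simp
next
  case (insert i0 S0)
  have rel: "c i0 * \<sigma> i0 x + (\<Sum>i\<in>S0. c i * \<sigma> i x) = 0" if "x \<in> K" for x
    using insert.prems(1) insert.hyps that by simp
  have S0z: "\<forall>i1\<in>S0. c i1 = 0"
  proof
    fix i1 assume i1: "i1 \<in> S0"
    then have "i1 \<noteq> i0" using insert.hyps by auto
    have h0: "\<forall>j\<in>insert i0 S0. i0 \<noteq> j \<longrightarrow> (\<exists>x\<in>K. \<sigma> i0 x \<noteq> \<sigma> j x)"
      by (rule bspec[OF insert.prems(3)]) simp
    have "\<exists>x\<in>K. \<sigma> i0 x \<noteq> \<sigma> i1 x" using bspec[OF h0, of i1] i1 \<open>i1 \<noteq> i0\<close> by auto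
    then obtain y where y: "y \<in> K" "\<sigma> i0 y \<noteq> \<sigma> i1 y" by blast
    define d where "d i = c i * (\<sigma> i y - \<sigma> i0 y)" for i
    have "\<forall>x\<in>K. (\<Sum>i\<in>S0. d i * \<sigma> i x) = 0"
    proof
      fix x assume x: "x \<in> K"
      have yx: "y * x \<in> K" using sf_basic(4)[OF sf y(1) x] .
      have m: "\<sigma> i (y * x) = \<sigma> i y * \<sigma> i x" if "i \<in> insert i0 S0" for i
        using fe_mult[of K "\<sigma> i" y x] insert.prems(2) that y(1) x by auto
      have e1: "c i0 * (\<sigma> i0 y * \<sigma> i0 x) + (\<Sum>i\<in>S0. c i * (\<sigma> i y * \<sigma> i x)) = 0"
        using rel[OF yx] m by simp
      have e2: "c i0 * \<sigma> i0 x + (\<Sum>i\<in>S0. c i * \<sigma> i x) = 0" using rel[OF x] .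
      have A: "(\<Sum>i\<in>S0. c i * (\<sigma> i y * \<sigma> i x)) = - (c i0 * (\<sigma> i0 y * \<sigma> i0 x))"
        using e1 by (simp only: add_eq_0_iff)
      have B: "(\<Sum>i\<in>S0. c i * \<sigma> i x) = - (c i0 * \<sigma> i0 x)"
        using e2 by (simp only: add_eq_0_iff)
      have "(\<Sum>i\<in>S0. d i * \<sigma> i x) = (\<Sum>i\<in>S0. c i * (\<sigma> i y * \<sigma> i x)) - \<sigma> i0 y * (\<Sum>i\<in>S0. c i * \<sigma> i x)"
        unfolding d_def by (simp add: sum_distrib_left sum_subtractf algebra_simps)
      also have "\<dots> = 0" unfolding A B by (simp add: algebra_simps)
      finally show "(\<Sum>i\<in>S0. d i * \<sigma> i x) = 0" .
    qed
    then have "\<forall>i\<in>S0. d i = 0" using insert.IH[of d] insert.prems(2,3) by auto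
    then have "d i1 = 0" using i1 by blast
    then show "c i1 = 0" using y(2) unfolding d_def by simp
  qed
  have "c i0 * \<sigma> i0 1 + (\<Sum>i\<in>S0. c i * \<sigma> i 1) = 0" using rel sf_basic(2)[OF sf] by blast
  then have "c i0 = 0" using S0z fe_one[of K "\<sigma> i0"] insert.prems(2) by simp
  then show ?case using S0z by simp
qed

lemma mat_vec_comp:
  assumes "A \<in> carrier_mat n n" "v \<in> carrier_vec n" "i < n"
  shows "vec_index (A *\<^sub>v v) i = (\<Sum>j<n. A $$ (i, j) * vec_index v j)"
  using assms by (simp add: scalar_prod_def row_def atLeast0LessThan)

lemma square_kernel:
  fixes M :: "complex mat"
  assumes M: "M \<in> carrier_mat n n"
    and left: "\<And>v. (\<forall>j<n. (\<Sum>i<n. M $$ (i, j) * v i) = 0) \<Longrightarrow> \<forall>i<n. v i = 0"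
    and w: "\<forall>i<n. (\<Sum>j<n. M $$ (i, j) * w j) = 0"
  shows "\<forall>j<n. w j = 0"
proof -
  have MT: "transpose_mat M \<in> carrier_mat n n" using M by simp
  have "Determinant.det M \<noteq> 0"
  proof
    assume "Determinant.det M = 0"
    then have "Determinant.det (transpose_mat M) = 0" using det_transpose[OF M] by simp
    then obtain v where v: "v \<in> carrier_vec n" "v \<noteq> 0\<^sub>v n" "transpose_mat M *\<^sub>v v = 0\<^sub>v n"
      using det_0_iff_vec_prod_zero_field[OF MT] by blast
    have "\<forall>j<n. (\<Sum>i<n. M $$ (i, j) * vec_index v i) = 0"
    proof (intro allI impI)
      fix j assume j: "j < n"
      have "vec_index (transpose_mat M *\<^sub>v v) j = 0" using v(3) j by simp
      then show "(\<Sum>i<n. M $$ (i, j) * vec_index v i) = 0"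
        using mat_vec_comp[OF MT v(1) j] j M by simp
    qed
    then have "\<forall>i<n. vec_index v i = 0" by (rule left)
    then have "v = 0\<^sub>v n" using v(1) by (intro eq_vecI) auto
    then show False using v(2) by simp
  qed
  then have nz: "\<not> (\<exists>v. v \<in> carrier_vec n \<and> v \<noteq> 0\<^sub>v n \<and> M *\<^sub>v v = 0\<^sub>v n)"
    using det_0_iff_vec_prod_zero_field[OF M] by blast
  define wv where "wv = Matrix.vec n w"
  have "M *\<^sub>v wv = 0\<^sub>v n"
  proof (intro eq_vecI)
    fix i assume "i < dim_vec (0\<^sub>v n :: complex vec)"
    then have i: "i < n" by simp
    show "vec_index (M *\<^sub>v wv) i = vec_index (0\<^sub>v n) i"
      using mat_vec_comp[OF M _ i, of wv] w i unfolding wv_def by simp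
  qed (use M in simp)
  then have "wv = 0\<^sub>v n" using nz vec_carrier[of n w] unfolding wv_def by blast
  then show ?thesis unfolding wv_def by (metis index_vec index_zero_vec(1))
qed

lemma f1:
  assumes nf: "number_field K n" and sig_r: "n = r1 + 2 * r2"
    and emb: "\<forall>i<n. field_embedding K (\<sigma> i)"
    and distinct: "\<forall>i<n. \<forall>j<n. i \<noteq> j \<longrightarrow> (\<exists>x\<in>K. \<sigma> i x \<noteq> \<sigma> j x)"
    and conj_emb: "\<forall>j. r1 \<le> j \<and> j < r1 + r2 \<longrightarrow> (\<forall>x\<in>K. \<sigma> (j + r2) x = cnj (\<sigma> j x))"
    and g: "\<forall>j<n. g j \<in> K" "K \<subseteq> Q.span (g ` {..<n})"
  shows "real_lin_indep n (\<lambda>j. canon_embed \<sigma> r1 r2 (g j))"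
  unfolding real_lin_indep_def
proof (rule allI, rule impI)
  fix c :: "nat \<Rightarrow> real"
  assume H: "\<forall>t. (\<Sum>j<n. of_real (c j) * canon_embed \<sigma> r1 r2 (g j) t) = 0"
  have sf: "subfield_of_complex K" using nf by (rule nf_sf)
  have all: "(\<Sum>j<n. \<sigma> i (g j) * of_real (c j)) = 0" if i: "i < n" for i
  proof (cases "i < r1 + r2")
    case True
    then show ?thesis using H[rule_format, of i] by (simp add: canon_embed_def mult.commute)
  next
    case False
    define i' where "i' = i - r2"
    have i': "r1 \<le> i'" "i' < r1 + r2" "i' + r2 = i" using False i sig_r unfolding i'_def by auto
    have cj: "\<sigma> i (g j) = cnj (\<sigma> i' (g j))" if "j < n" for j
      using conj_emb[rule_format, of i'] i' g(1) that by auto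
    have "(\<Sum>j<n. \<sigma> i (g j) * of_real (c j)) = cnj (\<Sum>j<n. of_real (c j) * canon_embed \<sigma> r1 r2 (g j) i')"
      using i' by (simp add: cj canon_embed_def mult.commute)
    then show ?thesis using H by simp
  qed
  define M where "M = Matrix.mat n n (\<lambda>(i, j). \<sigma> i (g j))"
  have M: "M \<in> carrier_mat n n" unfolding M_def by simp
  have left: "\<forall>i<n. v i = 0" if v: "\<forall>j<n. (\<Sum>i<n. M $$ (i, j) * v i) = 0" for v
  proof -
    have v': "(\<Sum>i<n. v i * \<sigma> i (g j)) = 0" if "j < n" for j
      using v[rule_format, OF that] that unfolding M_def by (simp add: mult.commute)
    define Z where "Z = {x. x \<in> K \<and> (\<Sum>i<n. v i * \<sigma> i x) = 0}"
    have sub: "Q.subspace Z"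
      unfolding Q.subspace_def Z_def
    proof (intro conjI ballI allI)
      show "0 \<in> {x. x \<in> K \<and> (\<Sum>i<n. v i * \<sigma> i x) = 0}"
      proof -
        have "\<forall>i<n. \<sigma> i 0 = 0" using fe_zero[OF _ sf] emb by blast
        then show ?thesis using sf_basic(1)[OF sf] by simp
      qed
    next
      fix x y assume x: "x \<in> {x. x \<in> K \<and> (\<Sum>i<n. v i * \<sigma> i x) = 0}"
        and y: "y \<in> {x. x \<in> K \<and> (\<Sum>i<n. v i * \<sigma> i x) = 0}"
      have xK: "x \<in> K" and yK: "y \<in> K" using x y by auto
      have ad: "\<sigma> i (x + y) = \<sigma> i x + \<sigma> i y" if "i < n" for i
        using fe_add[OF _ xK yK] emb that by blast
      have "(\<Sum>i<n. v i * \<sigma> i (x + y)) = (\<Sum>i<n. v i * \<sigma> i x + v i * \<sigma> i y)"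
        by (rule sum.cong) (auto simp: ad distrib_left)
      also have "\<dots> = (\<Sum>i<n. v i * \<sigma> i x) + (\<Sum>i<n. v i * \<sigma> i y)"
        by (rule sum.distrib)
      finally have "(\<Sum>i<n. v i * \<sigma> i (x + y)) = (\<Sum>i<n. v i * \<sigma> i x) + (\<Sum>i<n. v i * \<sigma> i y)" .
      then show "x + y \<in> {x. x \<in> K \<and> (\<Sum>i<n. v i * \<sigma> i x) = 0}"
        using x y sf_basic(3)[OF sf] by simp
    next
      fix r x assume x: "x \<in> {x. x \<in> K \<and> (\<Sum>i<n. v i * \<sigma> i x) = 0}"
      have xK: "x \<in> K" using x by auto
      have sc: "\<sigma> i (qs r x) = qs r (\<sigma> i x)" if "i < n" for i
        using fe_qs[OF _ sf xK] emb that by blast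
      have "(\<Sum>i<n. v i * \<sigma> i (qs r x)) = (\<Sum>i<n. v i * qs r (\<sigma> i x))"
        by (rule sum.cong) (simp_all add: sc)
      also have "\<dots> = of_rat r * (\<Sum>i<n. v i * \<sigma> i x)" by (simp add: sum_distrib_left qs_def ac_simps)
      finally have "(\<Sum>i<n. v i * \<sigma> i (qs r x)) = of_rat r * (\<Sum>i<n. v i * \<sigma> i x)" .
      then show "qs r x \<in> {x. x \<in> K \<and> (\<Sum>i<n. v i * \<sigma> i x) = 0}"
        using x sf_qs[OF sf] by simp
    qed
    have "g ` {..<n} \<subseteq> Z" using v' g(1) unfolding Z_def by auto
    then have "Q.span (g ` {..<n}) \<subseteq> Z" using Q.span_minimal sub by blast
    then have "\<forall>x\<in>K. (\<Sum>i\<in>{..<n}. v i * \<sigma> i x) = 0" using g(2) unfolding Z_def by auto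
    moreover have "\<forall>i\<in>{..<n}. field_embedding K (\<sigma> i)" using emb by blast
    moreover have "\<forall>i\<in>{..<n}. \<forall>j\<in>{..<n}. i \<noteq> j \<longrightarrow> (\<exists>x\<in>K. \<sigma> i x \<noteq> \<sigma> j x)"
      using distinct by blast
    ultimately have "\<forall>i\<in>{..<n}. v i = 0" using dedekind[OF sf, of "{..<n}" \<sigma> v] by blast
    then show ?thesis by blast
  qed
  have w: "\<forall>i<n. (\<Sum>j<n. M $$ (i, j) * of_real (c j)) = 0"
    using all unfolding M_def by simp
  have "\<forall>j<n. (of_real (c j) :: complex) = 0"
    by (rule square_kernel[OF M _ w]) (use left in blast)
  then show "\<forall>j<n. c j = 0" by simp
qed


lemma common_denom:
  fixes q :: "nat \<Rightarrow> rat"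
  shows "finite A \<Longrightarrow> \<exists>D::int. D > 0 \<and> (\<forall>i\<in>A. \<exists>z::int. of_int D * q i = of_int z)"
proof (induction A rule: finite_induct)
  case empty then show ?case by (intro exI[of _ 1]) auto
next
  case (insert a A)
  then obtain D where D: "D > 0" "\<forall>i\<in>A. \<exists>z::int. of_int D * q i = of_int z" by blast
  obtain p d where pd: "quotient_of (q a) = (p, d)" by (cases "quotient_of (q a)")
  then have qa: "q a = of_int p / of_int d" and d: "d > 0"
    by (rule quotient_of_div, rule quotient_of_denom_pos)
  show ?case
  proof (rule exI[of _ "D * d"], intro conjI ballI)
    show "D * d > 0" using D d by simp
    fix i assume iA: "i \<in> insert a A"
    show "\<exists>z::int. of_int (D * d) * q i = of_int z"
    proof (cases "i = a")
      case True
      then show ?thesis using d by (intro exI[of _ "D * p"]) (simp add: qa)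
    next
      case False
      then have "i \<in> A" using iA by simp
      then obtain z where z: "of_int D * q i = of_int z" using D by blast
      have "of_int (D * d) * q i = of_int d * (of_int D * q i)" by (simp add: algebra_simps)
      also have "\<dots> = of_int (d * z)" using z by simp
      finally show ?thesis by blast
    qed
  qed
qed

lemma alg_int_scale:
  assumes nf: "number_field K n" and b: "b \<in> K"
  shows "\<exists>d::int. d \<noteq> 0 \<and> of_int d * b \<in> ring_of_integers K"
proof -
  have sf: "subfield_of_complex K" using nf by (rule nf_sf)
  have pw: "b ^ j \<in> K" for j
    by (induction j) (simp_all add: sf_basic(2)[OF sf] sf_basic(4)[OF sf b])
  have "\<not> qind (Suc n) (\<lambda>j. b ^ j)"
  proof
    assume H: "qind (Suc n) (\<lambda>j. b ^ j)"
    have "(\<lambda>j. b ^ j) ` {..<Suc n} \<subseteq> K" using pw by auto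
    then have "card ((\<lambda>j. b ^ j) ` {..<Suc n}) \<le> n" using KB1[OF nf _ qind_indep[OF H]] by blast
    then show False using qind_card[OF H] by simp
  qed
  then obtain q where q: "(\<Sum>j<Suc n. of_rat (q j) * b ^ j) = 0" "\<exists>j<Suc n. q j \<noteq> 0"
    unfolding qind_def by blast
  obtain D where D: "D > 0" "\<forall>i\<in>{..<Suc n}. \<exists>z::int. of_int D * q i = of_int z"
    using common_denom[of "{..<Suc n}" q] by blast
  obtain a where a: "\<forall>i\<in>{..<Suc n}. of_int D * q i = of_int (a i)"
    using bchoice[OF D(2)] by blast
  have a_sum: "(\<Sum>j<Suc n. of_int (a j) * b ^ j) = 0"
  proof -
    have "(\<Sum>j<Suc n. of_int (a j) * b ^ j) = (\<Sum>j<Suc n. of_int D * (of_rat (q j) * b ^ j))"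
    proof (rule sum.cong[OF refl])
      fix j assume "j \<in> {..<Suc n}"
      then have "(of_int (a j) :: complex) = of_rat (of_int D * q j)" using a by (metis of_rat_of_int_eq)
      then show "of_int (a j) * b ^ j = of_int D * (of_rat (q j) * b ^ j)" by (simp add: of_rat_mult)
    qed
    also have "\<dots> = of_int D * (\<Sum>j<Suc n. of_rat (q j) * b ^ j)" by (rule sum_distrib_left[symmetric])
    finally show ?thesis using q(1) by simp
  qed
  obtain j0 where j0: "j0 < Suc n" "q j0 \<noteq> 0" using q(2) by blast
  have "a j0 \<noteq> 0"
  proof
    assume "a j0 = 0"
    then have "of_int D * q j0 = 0" using a j0(1) by simp
    then show False using D(1) j0(2) by simp
  qed
  define Z where "Z = {j. j < Suc n \<and> a j \<noteq> 0}"
  have Zf: "finite Z" "Z \<noteq> {}" using j0 \<open>a j0 \<noteq> 0\<close> unfolding Z_def by auto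
  define m where "m = Max Z"
  have m: "m < Suc n" "a m \<noteq> 0" using Max_in[OF Zf] unfolding m_def Z_def by auto
  have above: "a j = 0" if "m < j" "j < Suc n" for j
    using Max_ge[OF Zf(1), of j] that unfolding m_def Z_def by fastforce
  have sum_m: "(\<Sum>j<Suc m. of_int (a j) * b ^ j) = 0"
  proof -
    have "(\<Sum>j<Suc n. of_int (a j) * b ^ j) = (\<Sum>j<Suc m. of_int (a j) * b ^ j)"
      by (rule sum.mono_neutral_right) (use m above in auto)
    then show ?thesis using a_sum by simp
  qed
  have m0: "m > 0"
  proof (rule ccontr)
    assume "\<not> m > 0" then have m00: "m = 0" by simp
    then have "(of_int (a 0) :: complex) = 0" using sum_m by simp
    then show False using m(2) m00 by simp
  qed
  define am where "am = a m"
  define y where "y = (of_int am :: complex) * b"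
  define c where "c i = a i * am ^ (m - 1 - i)" for i
  have key: "y ^ m + (\<Sum>i<m. of_int (c i) * y ^ i) = 0"
  proof -
    have pm: "(of_int am :: complex) ^ m = of_int am ^ (m - 1) * of_int am"
      using m0 by (cases m) (simp_all add: mult.commute)
    have t1: "y ^ m = of_int am ^ (m - 1) * (of_int (a m) * b ^ m)"
      unfolding y_def am_def using pm unfolding am_def by (simp add: power_mult_distrib)
    have t2: "of_int (c i) * y ^ i = of_int am ^ (m - 1) * (of_int (a i) * b ^ i)" if "i < m" for i
    proof -
      have "(of_int am :: complex) ^ (m - 1 - i) * of_int am ^ i = of_int am ^ (m - 1)"
        using that by (simp add: power_add[symmetric])
      then show ?thesis unfolding c_def y_def by (simp add: power_mult_distrib algebra_simps)
    qed
    have "y ^ m + (\<Sum>i<m. of_int (c i) * y ^ i)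
        = of_int am ^ (m - 1) * (of_int (a m) * b ^ m) + (\<Sum>i<m. of_int am ^ (m - 1) * (of_int (a i) * b ^ i))"
      using t1 t2 by simp
    also have "\<dots> = of_int am ^ (m - 1) * (\<Sum>j<Suc m. of_int (a j) * b ^ j)"
      by (simp add: sum_distrib_left algebra_simps)
    also have "\<dots> = 0" using sum_m by simp
    finally show ?thesis .
  qed
  define P :: "int poly" where "P = monom 1 m + (\<Sum>i<m. monom (c i) i)"
  have degS: "degree (\<Sum>i<m. monom (c i) i) < degree (monom (1::int) m)"
  proof -
    have "degree (\<Sum>i<m. monom (c i) i) \<le> m - 1"
    proof (rule degree_sum_le)
      fix i assume "i \<in> {..<m}"
      then show "degree (monom (c i) i) \<le> m - 1" using degree_monom_le[of "c i" i] by simp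
    qed simp
    then show ?thesis using m0 by (simp add: degree_monom_eq)
  qed
  have lc: "lead_coeff P = 1"
  proof -
    have "lead_coeff ((\<Sum>i<m. monom (c i) i) + monom (1::int) m) = lead_coeff (monom (1::int) m)"
      by (rule lead_coeff_add_le[OF degS])
    then show ?thesis unfolding P_def by (simp add: add.commute degree_monom_eq)
  qed
  have mapP: "map_poly (of_int :: int \<Rightarrow> complex) P = monom 1 m + (\<Sum>i<m. monom (of_int (c i)) i)"
    by (rule poly_eqI) (simp add: P_def coeff_map_poly coeff_sum coeff_monom)
  have "poly (map_poly (of_int :: int \<Rightarrow> complex) P) y = 0"
    unfolding mapP using key by (simp add: poly_sum poly_monom)
  then have ai: "algebraic_integer y" unfolding algebraic_integer_def using lc by blast
  have "y \<in> K" unfolding y_def using sf_basic(4)[OF sf sf_int[OF sf] b] .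
  then have "y \<in> ring_of_integers K" using ai unfolding ring_of_integers_def by simp
  moreover have "am \<noteq> 0" using m(2) unfolding am_def .
  ultimately show ?thesis unfolding y_def by blast
qed

lemma ideal_basis:
  assumes nf: "number_field K n" and I: "fractional_ideal K I"
  obtains h where "\<forall>j<n. h j \<in> I" "qind n h"
proof -
  obtain b where b: "\<forall>j<n. b j \<in> K" "qind n b" using nf_family[OF nf] by blast
  have "\<forall>j\<in>{..<n}. \<exists>d::int. d \<noteq> 0 \<and> of_int d * b j \<in> ring_of_integers K"
    using alg_int_scale[OF nf] b(1) by blast
  then have "\<exists>d. \<forall>j\<in>{..<n}. d j \<noteq> 0 \<and> of_int (d j) * b j \<in> ring_of_integers K"
    by (rule bchoice)
  then obtain d where d: "\<forall>j\<in>{..<n}. d j \<noteq> 0 \<and> of_int (d j) * b j \<in> ring_of_integers K" ..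
  have Iprops: "0 \<in> I" "I \<noteq> {0}" "\<forall>a\<in>ring_of_integers K. \<forall>x\<in>I. a * x \<in> I"
    using I unfolding fractional_ideal_def by auto
  obtain x0 where x0: "x0 \<in> I" "x0 \<noteq> 0" using Iprops(1,2) by blast
  define h where "h j = (of_int (d j) * b j) * x0" for j
  have hI: "\<forall>j<n. h j \<in> I" using d Iprops(3) x0(1) unfolding h_def by auto
  have "qind n h" unfolding qind_def
  proof (rule allI, rule impI)
    fix q assume H: "(\<Sum>j<n. of_rat (q j) * h j) = 0"
    have "(\<Sum>j<n. of_rat (q j) * h j) = x0 * (\<Sum>j<n. of_rat (q j * of_int (d j)) * b j)"
      unfolding h_def by (simp add: sum_distrib_left of_rat_mult ac_simps)
    then have "(\<Sum>j<n. of_rat (q j * of_int (d j)) * b j) = 0" using H x0(2) by simp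
    then have "\<forall>j<n. q j * of_int (d j) = 0"
      using spec[OF b(2)[unfolded qind_def], of "\<lambda>j. q j * of_int (d j)"] by simp
    then show "\<forall>j<n. q j = 0" using d by auto
  qed
  then show ?thesis using that hI by blast
qed

lemma rli_restrict:
  assumes "real_lin_indep n e" "k \<le> n" shows "real_lin_indep k e"
  unfolding real_lin_indep_def
proof (rule allI, rule impI)
  fix c :: "nat \<Rightarrow> real" assume c: "\<forall>t. (\<Sum>j<k. of_real (c j) * e j t) = 0"
  define c' where "c' j = (if j < k then c j else 0)" for j
  have "\<forall>t. (\<Sum>j<n. of_real (c' j) * e j t) = 0"
  proof
    fix t
    have "(\<Sum>j<n. of_real (c' j) * e j t) = (\<Sum>j<k. of_real (c' j) * e j t)"
      by (rule sum.mono_neutral_right) (use assms(2) in \<open>auto simp: c'_def\<close>)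
    also have "\<dots> = (\<Sum>j<k. of_real (c j) * e j t)" by (rule sum.cong) (auto simp: c'_def)
    finally show "(\<Sum>j<n. of_real (c' j) * e j t) = 0" using c by simp
  qed
  then have "\<forall>j<n. c' j = 0" using assms(1) unfolding real_lin_indep_def by blast
  then have c0: "c' j = 0" if "j < k" for j using assms(2) that by simp
  show "\<forall>j<k. c j = 0"
  proof (intro allI impI)
    fix j assume "j < k"
    then show "c j = 0" using c0[of j] unfolding c'_def by simp
  qed
qed

lemma rli_cong:
  assumes "real_lin_indep m e" "\<forall>j<m. e j = e' j" shows "real_lin_indep m e'"
  using assms unfolding real_lin_indep_def by (metis (no_types, lifting) lessThan_iff sum.cong)

lemma inf_mult:
  fixes A B C :: "real set"
  assumes A: "A \<noteq> {}" "\<forall>a\<in>A. a \<ge> 0" and B: "B \<noteq> {}" "\<forall>b\<in>B. b \<ge> 0" and C: "\<forall>c\<in>C. c \<ge> 0"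
    and H: "\<forall>a\<in>A. \<forall>b\<in>B. \<exists>c\<in>C. c \<le> a * b"
  shows "Inf C \<le> Inf A * Inf B"
proof -
  have bddC: "bdd_below C" using C by (auto intro: bdd_belowI)
  have infA: "Inf A \<ge> 0" using cInf_greatest[OF A(1)] A(2) by auto
  have step1: "Inf C \<le> Inf A * b" if b: "b \<in> B" for b
  proof (cases "b = 0")
    case True
    obtain a where "a \<in> A" using A(1) by blast
    then obtain c where "c \<in> C" "c \<le> a * b" using H b by blast
    then have "Inf C \<le> 0" using cInf_lower[OF _ bddC] True by force
    then show ?thesis using True by simp
  next
    case False
    then have bpos: "b > 0" using B(2) b by force
    have "Inf C / b \<le> Inf A"
    proof (rule cInf_greatest[OF A(1)])
      fix a assume "a \<in> A"
      then obtain c where "c \<in> C" "c \<le> a * b" using H b by blast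
      then have "Inf C \<le> a * b" using cInf_lower[OF _ bddC] by force
      then show "Inf C / b \<le> a" using bpos by (simp add: pos_divide_le_eq)
    qed
    then show ?thesis using bpos by (simp add: pos_divide_le_eq)
  qed
  show ?thesis
  proof (cases "Inf A = 0")
    case True
    obtain b where "b \<in> B" using B(1) by blast
    then show ?thesis using step1 True by force
  next
    case False
    then have apos: "Inf A > 0" using infA by simp
    have "Inf C / Inf A \<le> Inf B"
    proof (rule cInf_greatest[OF B(1)])
      fix b assume "b \<in> B"
      then have "Inf C \<le> Inf A * b" by (rule step1)
      then show "Inf C / Inf A \<le> b" using apos by (simp add: pos_divide_le_eq mult.commute)
    qed
    then show ?thesis using apos by (simp add: pos_divide_le_eq mult.commute)
  qed
qed


lemma setW_I:
  assumes "\<forall>j<i. e j \<in> \<Gamma>" "real_lin_indep i e"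
  shows "Max ((\<lambda>j. N (e j)) ` {..<i}) \<in> {Max ((\<lambda>j. N (e j)) ` {..<i}) | e. (\<forall>j<i. e j \<in> \<Gamma>) \<and> real_lin_indep i e}"
  unfolding mem_Collect_eq by (rule exI[of _ e]) (simp add: assms)

lemma setW_E:
  assumes "a \<in> {Max ((\<lambda>j. N (e j)) ` {..<i}) | e. (\<forall>j<i. e j \<in> \<Gamma>) \<and> real_lin_indep i e}"
  obtains e where "a = Max ((\<lambda>j. N (e j)) ` {..<i})" "\<forall>j<i. e j \<in> \<Gamma>" "real_lin_indep i e"
proof -
  from assms have "\<exists>e. a = Max ((\<lambda>j. N (e j)) ` {..<i}) \<and> (\<forall>j<i. e j \<in> \<Gamma>) \<and> real_lin_indep i e"
    by (rule CollectD)
  then obtain e where e: "a = Max ((\<lambda>j. N (e j)) ` {..<i}) \<and> (\<forall>j<i. e j \<in> \<Gamma>) \<and> real_lin_indep i e" ..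
  show thesis by (rule that[of e]) (use e in simp_all)
qed

theorem mainTheorem4:
  fixes K :: "complex set" and n r1 r2 k l :: nat
    and \<sigma> :: "nat \<Rightarrow> complex \<Rightarrow> complex"
    and N :: "(nat \<Rightarrow> complex) \<Rightarrow> real"
    and I J :: "complex set"
  assumes nf: "number_field K n"
    and sig_r: "n = r1 + 2 * r2"
    and emb: "\<forall>i<n. field_embedding K (\<sigma> i)"
    and distinct: "\<forall>i<n. \<forall>j<n. i \<noteq> j \<longrightarrow> (\<exists>x\<in>K. \<sigma> i x \<noteq> \<sigma> j x)"
    and real_emb: "\<forall>i<r1. \<forall>x\<in>K. \<sigma> i x \<in> \<real>"
    and conj_emb: "\<forall>j. r1 \<le> j \<and> j < r1 + r2 \<longrightarrow> (\<forall>x\<in>K. \<sigma> (j + r2) x = cnj (\<sigma> j x))"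
    and norm: "is_norm_on (Vspace r1 r2) N"
    and submult: "\<forall>v\<in>Vspace r1 r2. \<forall>w\<in>Vspace r1 r2. N (\<lambda>t. v t * w t) \<le> N v * N w"
    and kl: "1 \<le> k" "k \<le> n" "1 \<le> l" "l \<le> n" "k + l \<ge> n + 1"
    and I: "fractional_ideal K I" and J: "fractional_ideal K J"
  shows "minkowski_min N (canon_embed \<sigma> r1 r2 ` frac_ideal_mult I J) n
         \<le> minkowski_min N (canon_embed \<sigma> r1 r2 ` I) k * minkowski_min N (canon_embed \<sigma> r1 r2 ` J) l"
proof -
  have sf: "subfield_of_complex K" using nf by (rule nf_sf)
  define E where "E = canon_embed \<sigma> r1 r2"
  have rn: "r1 + r2 \<le> n" using sig_r by simp
  have EV: "E x \<in> Vspace r1 r2" if "x \<in> K" for x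
    using real_emb that unfolding E_def canon_embed_def Vspace_def by auto
  have Emult: "(\<lambda>t. E x t * E y t) = E (x * y)" if xy: "x \<in> K" "y \<in> K" for x y
  proof (rule ext)
    fix t show "E x t * E y t = E (x * y) t"
    proof (cases "t < r1 + r2")
      case True
      then have "field_embedding K (\<sigma> t)" using emb rn by auto
      then show ?thesis using True fe_mult[OF _ xy] unfolding E_def canon_embed_def by simp
    qed (simp add: E_def canon_embed_def)
  qed
  have Nnn: "N v \<ge> 0" if "v \<in> Vspace r1 r2" for v
    using norm that unfolding is_norm_on_def by auto
  have IK: "I \<subseteq> K" and JK: "J \<subseteq> K" using I J unfolding fractional_ideal_def by auto
  have IJK: "frac_ideal_mult I J \<subseteq> K"
  proof
    fix z assume "z \<in> frac_ideal_mult I J"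
    then have "\<exists>(m::nat) a b. z = (\<Sum>t<m. a t * b t) \<and> (\<forall>t<m. a t \<in> I \<and> b t \<in> J)"
      unfolding frac_ideal_mult_def by (rule CollectD)
    then obtain m :: nat where "\<exists>a b. z = (\<Sum>t<m. a t * b t) \<and> (\<forall>t<m. a t \<in> I \<and> b t \<in> J)" ..
    then obtain a where "\<exists>b. z = (\<Sum>t<m. a t * b t) \<and> (\<forall>t<m. a t \<in> I \<and> b t \<in> J)" ..
    then obtain b where zz: "z = (\<Sum>t<m. a t * b t) \<and> (\<forall>t<m. a t \<in> I \<and> b t \<in> J)" ..
    have z: "z = (\<Sum>t<m. a t * b t)" "\<forall>t<m. a t \<in> I \<and> b t \<in> J"
      using zz by (rule conjunct1, rule conjunct2)
    show "z \<in> K" unfolding z(1)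
    proof (rule sf_sum[OF sf])
      fix j assume "j \<in> {..<m}"
      then have "a j \<in> K" "b j \<in> K" using z(2) IK JK by auto
      then show "a j * b j \<in> K" by (rule sf_basic(4)[OF sf])
    qed
  qed
  have r2q: "qind m x" if x: "\<forall>j<m. x j \<in> K" "real_lin_indep m (\<lambda>j. E (x j))" for m x
    unfolding qind_def
  proof (rule allI, rule impI)
    fix q assume H: "(\<Sum>j<m. of_rat (q j) * x j) = 0"
    have "\<forall>t. (\<Sum>j<m. of_real (of_rat (q j) :: real) * E (x j) t) = 0"
    proof
      fix t
      show "(\<Sum>j<m. of_real (of_rat (q j) :: real) * E (x j) t) = 0"
      proof (cases "t < r1 + r2")
        case True
        then have fe: "field_embedding K (\<sigma> t)" using emb rn by auto
        have "(\<Sum>j<m. of_real (of_rat (q j) :: real) * E (x j) t) = (\<Sum>j<m. \<sigma> t (qs (q j) (x j)))"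
          using True fe_qs[OF fe sf] x(1) unfolding E_def canon_embed_def
          by (intro sum.cong) (auto simp: of_real_of_rat_c qs_def)
        also have "\<dots> = \<sigma> t (\<Sum>j<m. qs (q j) (x j))"
          using fe_sum[OF fe sf, of "{..<m}" "\<lambda>j. qs (q j) (x j)"] x(1) sf_qs[OF sf] by auto
        also have "\<dots> = 0" using H fe_zero[OF fe sf] unfolding qs_def by simp
        finally show ?thesis .
      qed (simp add: E_def canon_embed_def)
    qed
    then have "\<forall>j<m. (of_rat (q j) :: real) = 0"
      using spec[OF x(2)[unfolded real_lin_indep_def], of "\<lambda>j. of_rat (q j)"] by simp
    then show "\<forall>j<m. q j = 0" by simp
  qed
  have f1': "real_lin_indep n (\<lambda>j. E (g j))" if "\<forall>j<n. g j \<in> K" "K \<subseteq> Q.span (g ` {..<n})" for g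
    unfolding E_def by (rule f1[OF nf sig_r emb distinct conj_emb that])
  define W where "W \<Gamma> i = {Max ((\<lambda>j. N (e j)) ` {..<i}) | e. (\<forall>j<i. e j \<in> \<Gamma>) \<and> real_lin_indep i e}" for \<Gamma> i
  have mm: "minkowski_min N \<Gamma> i = Inf (W \<Gamma> i)" for \<Gamma> i
    unfolding minkowski_min_def W_def ..
  have nonempty: "W (E ` X) i \<noteq> {}" if X: "fractional_ideal K X" and i: "i \<le> n" for X i
  proof -
    obtain h where h: "\<forall>j<n. h j \<in> X" "qind n h" using ideal_basis[OF nf X] by blast
    have XK: "X \<subseteq> K" using X unfolding fractional_ideal_def by auto
    have hK: "\<forall>j<n. h j \<in> K" using h(1) XK by auto
    have "K \<subseteq> Q.span (h ` {..<n})"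
      by (rule KB3[OF nf _ qind_indep[OF h(2)] qind_card[OF h(2)]]) (use hK in auto)
    then have "real_lin_indep n (\<lambda>j. E (h j))" by (rule f1'[OF hK])
    then have r: "real_lin_indep i (\<lambda>j. E (h j))" using i by (rule rli_restrict)
    have m: "\<forall>j<i. E (h j) \<in> E ` X" using h(1) i by auto
    have "Max ((\<lambda>j. N (E (h j))) ` {..<i}) \<in> W (E ` X) i" unfolding W_def by (rule setW_I[OF m r])
    then show ?thesis by blast
  qed
  have nonneg: "\<forall>a\<in>W (E ` X) i. a \<ge> 0" if X: "X \<subseteq> K" and i: "1 \<le> i" for X i
  proof
    fix a assume "a \<in> W (E ` X) i"
    then obtain e where e: "a = Max ((\<lambda>j. N (e j)) ` {..<i})" "\<forall>j<i. e j \<in> E ` X"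
      unfolding W_def by (rule setW_E)
    have "N (e 0) \<le> a" unfolding e(1) by (rule Max_ge) (use i in auto)
    moreover have "N (e 0) \<ge> 0" using e(2) i X EV Nnn by force
    ultimately show "a \<ge> 0" by simp
  qed
  have main: "\<exists>c\<in>W (E ` frac_ideal_mult I J) n. c \<le> a * b"
    if a: "a \<in> W (E ` I) k" and b: "b \<in> W (E ` J) l" for a b
  proof -
    obtain e where e: "a = Max ((\<lambda>j. N (e j)) ` {..<k})" "\<forall>j<k. e j \<in> E ` I" "real_lin_indep k e"
      using a unfolding W_def by (rule setW_E)
    obtain f where f: "b = Max ((\<lambda>j. N (f j)) ` {..<l})" "\<forall>j<l. f j \<in> E ` J" "real_lin_indep l f"
      using b unfolding W_def by (rule setW_E)
    have "\<forall>j\<in>{..<k}. \<exists>x. x \<in> I \<and> e j = E x" using e(2) by auto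
    then have "\<exists>x. \<forall>j\<in>{..<k}. x j \<in> I \<and> e j = E (x j)" by (rule bchoice)
    then obtain x where x: "\<forall>j\<in>{..<k}. x j \<in> I \<and> e j = E (x j)" ..
    have "\<forall>j\<in>{..<l}. \<exists>y. y \<in> J \<and> f j = E y" using f(2) by auto
    then have "\<exists>y. \<forall>j\<in>{..<l}. y j \<in> J \<and> f j = E (y j)" by (rule bchoice)
    then obtain y where y: "\<forall>j\<in>{..<l}. y j \<in> J \<and> f j = E (y j)" ..
    have xK: "\<forall>j<k. x j \<in> K" using x IK by auto
    have yK: "\<forall>j<l. y j \<in> K" using y JK by auto
    have qx: "qind k x" by (rule r2q[OF xK rli_cong[OF e(3)]]) (use x in auto)
    have qy: "qind l y" by (rule r2q[OF yK rli_cong[OF f(3)]]) (use y in auto)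
    define X where "X = x ` {..<k}"
    define Y where "Y = y ` {..<l}"
    have X: "X \<subseteq> K" "Q.independent X" "card X = k"
      unfolding X_def using xK qind_indep[OF qx] qind_card[OF qx] by auto
    have Y: "Y \<subseteq> K" "Q.independent Y" "card Y = l"
      unfolding Y_def using yK qind_indep[OF qy] qind_card[OF qy] by auto
    define P where "P = {u * v | u v. u \<in> X \<and> v \<in> Y}"
    have KP: "K \<subseteq> Q.span P" unfolding P_def
      by (rule prod_span[OF nf X(1,2) Y(1,2)]) (use X(3) Y(3) kl(5) in simp)
    obtain C where C: "C \<subseteq> P" "Q.independent C" "P \<subseteq> Q.span C"
      using Q.maximal_independent_subset[of P] by blast
    have PK: "P \<subseteq> K" using X(1) Y(1) sf_basic(4)[OF sf] unfolding P_def by blast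
    have "Q.span P \<subseteq> Q.span C" using Q.span_minimal[OF C(3)] by simp
    then have KC: "K \<subseteq> Q.span C" using KP by blast
    have CK: "C \<subseteq> K" using C(1) PK by blast
    have fC: "finite C" and cC1: "card C \<le> n" using KB1[OF nf CK C(2)] by auto
    have cC: "card C = n" using KB2[OF nf fC KC] cC1 by simp
    obtain g where g: "bij_betw g {..<n} C"
      using ex_bij_betw_nat_finite[OF fC] cC by (auto simp: atLeast0LessThan)
    have gC: "g ` {..<n} = C" and ginj: "inj_on g {..<n}" using g unfolding bij_betw_def by auto
    have gK: "\<forall>j<n. g j \<in> K" using gC CK by auto
    have rg: "real_lin_indep n (\<lambda>j. E (g j))" using f1'[OF gK] KC gC by simp
    have gP: "\<exists>i<k. \<exists>i'<l. g j = x i * y i'" if "j < n" for j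
    proof -
      have "g j \<in> P" using gC C(1) that by auto
      then show ?thesis unfolding P_def X_def Y_def by auto
    qed
    have Nx: "N (E (x i)) \<le> a" "N (E (x i)) \<ge> 0" if "i < k" for i
    proof -
      have "N (E (x i)) = N (e i)" using x that by auto
      also have "\<dots> \<le> a" unfolding e(1) by (rule Max_ge) (use that in auto)
      finally show "N (E (x i)) \<le> a" .
      show "N (E (x i)) \<ge> 0" using Nnn EV xK that by auto
    qed
    have Ny: "N (E (y i)) \<le> b" "N (E (y i)) \<ge> 0" if "i < l" for i
    proof -
      have "N (E (y i)) = N (f i)" using y that by auto
      also have "\<dots> \<le> b" unfolding f(1) by (rule Max_ge) (use that in auto)
      finally show "N (E (y i)) \<le> b" .
      show "N (E (y i)) \<ge> 0" using Nnn EV yK that by auto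
    qed
    have gbound: "N (E (g j)) \<le> a * b" if jn: "j < n" for j
    proof -
      obtain i i' where ii: "i < k" "i' < l" "g j = x i * y i'" using gP[OF jn] by blast
      have "N (E (g j)) = N (\<lambda>t. E (x i) t * E (y i') t)" using Emult xK yK ii by simp
      also have "\<dots> \<le> N (E (x i)) * N (E (y i'))" using submult EV xK yK ii by simp
      also have "\<dots> \<le> a * b" by (rule mult_mono) (use Nx[OF ii(1)] Ny[OF ii(2)] in auto)
      finally show ?thesis .
    qed
    have gIJ: "\<forall>j<n. E (g j) \<in> E ` frac_ideal_mult I J"
    proof (intro allI impI)
      fix j assume j: "j < n"
      obtain i i' where ii: "i < k" "i' < l" "g j = x i * y i'" using gP[OF j] by blast
      have H: "g j = (\<Sum>t<(1::nat). x i * y i') \<and> (\<forall>t<(1::nat). x i \<in> I \<and> y i' \<in> J)"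
        using ii x y by simp
      have "g j \<in> frac_ideal_mult I J" unfolding frac_ideal_mult_def mem_Collect_eq
        by (rule exI[of _ "1::nat"], rule exI[of _ "\<lambda>_. x i"], rule exI[of _ "\<lambda>_. y i'"]) (use H in simp)
      then show "E (g j) \<in> E ` frac_ideal_mult I J" by blast
    qed
    have n1: "n \<ge> 1" using kl by simp
    have "Max ((\<lambda>j. N (E (g j))) ` {..<n}) \<le> a * b"
    proof (rule Max.boundedI)
      show "finite ((\<lambda>j. N (E (g j))) ` {..<n})" by simp
      have "0 \<in> {..<n}" using n1 by simp
      then show "(\<lambda>j. N (E (g j))) ` {..<n} \<noteq> {}" by blast
      fix v assume "v \<in> (\<lambda>j. N (E (g j))) ` {..<n}"
      then show "v \<le> a * b" using gbound by auto
    qed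
    moreover have "Max ((\<lambda>j. N (E (g j))) ` {..<n}) \<in> W (E ` frac_ideal_mult I J) n"
      unfolding W_def by (rule setW_I[OF gIJ rg])
    ultimately show ?thesis by blast
  qed
  have "Inf (W (E ` frac_ideal_mult I J) n) \<le> Inf (W (E ` I) k) * Inf (W (E ` J) l)"
  proof (rule inf_mult)
    show "W (E ` I) k \<noteq> {}" using nonempty[OF I kl(2)] .
    show "W (E ` J) l \<noteq> {}" using nonempty[OF J kl(4)] .
    show "\<forall>a\<in>W (E ` I) k. a \<ge> 0" using nonneg[OF IK kl(1)] .
    show "\<forall>a\<in>W (E ` J) l. a \<ge> 0" using nonneg[OF JK kl(3)] .
    have "1 \<le> n" using kl(1,2) by simp
    then show "\<forall>a\<in>W (E ` frac_ideal_mult I J) n. a \<ge> 0" by (rule nonneg[OF IJK])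
    show "\<forall>a\<in>W (E ` I) k. \<forall>b\<in>W (E ` J) l. \<exists>c\<in>W (E ` frac_ideal_mult I J) n. c \<le> a * b"
      using main by blast
  qed
  then show ?thesis unfolding mm E_def .
qed

end
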